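(* Let $Y\subseteq\Omega$, $D\in\mathcal{I}^{\mathbf{c}}(Y)$ and $e\in\max(Y)$. Then $$\pi(Y,D)-\pi(Y-\{e\},D-\{e\})=\begin{cases}\eta_{(e)}\Big(\prod_{i\in\langle\{e\}\rangle_Y-\{e\}}\tau_{(i)}\Big)x^{|\langle\{e\}\rangle_Y|}\,\pi(Y-\langle\{e\}\rangle_Y,D),& e\notin D;\\ 0,& e\in D-\min(D);\\ -\Big(\prod_{i\in\langle\{e\}\rangle_Y-\{e\}}\tau_{(i)}\Big)x^{|\langle\{e\}\rangle_Y|}\,\pi(Y-\langle\{e\}\rangle_Y,D-\{e\}),& e\in\min(D).\end{cases}$$
   Context: $\Omega$ is a finite set and $\mathbf{P}=(\Omega,\preccurlyeq_{\mathbf{P}})$ a poset. For $Y\subseteq\Omega$: $\max(Y)$, $\min(Y)$ are the maximal, minimal elements of $Y$ w.r.t. $\preccurlyeq_{\mathbf{P}}$; $\mathcal{I}(Y)$ is the set of down-closed subsets of $Y$ (induced order); $\mathcal{I}^{\mathbf{c}}(Y)$ is the set of up-closed subsets of $Y$; for $A\subseteq Y$, $\langle A\rangle_Y=\{y\in Y:\exists a\in A, y\preccurlyeq_{\mathbf{P}}a\}$. $K$ is a commutative ring, $\tau,\eta\in K^{\Omega}$. For $D,I\subseteq\Omega$, $\varphi(D,I)=(-1)^{|I\cap D|}\big(\prod_{i\in I-\max(I)}\tau_{(i)}\big)\big(\prod_{i\in\max(I)-D}\eta_{(i)}\big)$ if $I\cap D\subseteq\max(I)$, and $0$ otherwise;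 for $D\subseteq Y\subseteq\Omega$, $\pi(Y,D)=\sum_{I\in\mathcal{I}(Y)}\varphi(D,I)x^{|I|}\in K[x]$. *)

theory Defs
  imports "HOL-Computational_Algebra.Polynomial"
begin

definition partial_order_pred :: "'a set \<Rightarrow> ('a \<Rightarrow> 'a \<Rightarrow> bool) \<Rightarrow> bool" where
  "partial_order_pred \<Omega> le \<longleftrightarrow>
     (\<forall>x\<in>\<Omega>. le x x) \<and>
     (\<forall>x\<in>\<Omega>. \<forall>y\<in>\<Omega>. le x y \<and> le y x \<longrightarrow> x = y) \<and>
     (\<forall>x\<in>\<Omega>. \<forall>y\<in>\<Omega>. \<forall>z\<in>\<Omega>. le x y \<and> le y z \<longrightarrow> le x z)"

definition maxs :: "('a \<Rightarrow> 'a \<Rightarrow> bool) \<Rightarrow> 'a set \<Rightarrow> 'a set" where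
  "maxs le Y = {y\<in>Y. \<forall>z\<in>Y. le y z \<longrightarrow> z = y}"

definition mins :: "('a \<Rightarrow> 'a \<Rightarrow> bool) \<Rightarrow> 'a set \<Rightarrow> 'a set" where
  "mins le Y = {y\<in>Y. \<forall>z\<in>Y. le z y \<longrightarrow> z = y}"

definition downsets :: "('a \<Rightarrow> 'a \<Rightarrow> bool) \<Rightarrow> 'a set \<Rightarrow> 'a set set" where
  "downsets le Y = {I. I \<subseteq> Y \<and> (\<forall>a\<in>I. \<forall>y\<in>Y. le y a \<longrightarrow> y \<in> I)}"

text \<open>Up-closed subsets of Y (the set I^c(Y)).\<close>
definition upsets :: "('a \<Rightarrow> 'a \<Rightarrow> bool) \<Rightarrow> 'a set \<Rightarrow> 'a set set" where
  "upsets le Y = {I. I \<subseteq> Y \<and> (\<forall>a\<in>I. \<forall>y\<in>Y. le a y \<longrightarrow> y \<in> I)}"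

definition down_gen :: "('a \<Rightarrow> 'a \<Rightarrow> bool) \<Rightarrow> 'a set \<Rightarrow> 'a set \<Rightarrow> 'a set" where
  "down_gen le Y A = {y\<in>Y. \<exists>a\<in>A. le y a}"

definition phi :: "('a \<Rightarrow> 'a \<Rightarrow> bool) \<Rightarrow> ('a \<Rightarrow> 'k::comm_ring_1) \<Rightarrow> ('a \<Rightarrow> 'k)
                   \<Rightarrow> 'a set \<Rightarrow> 'a set \<Rightarrow> 'k" where
  "phi le \<tau> \<eta> D I =
     (if I \<inter> D \<subseteq> maxs le I
      then (-1) ^ card (I \<inter> D) * (\<Prod>i\<in>I - maxs le I. \<tau> i) * (\<Prod>i\<in>maxs le I - D. \<eta> i)
      else 0)"

definition pi_poly :: "('a \<Rightarrow> 'a \<Rightarrow> bool) \<Rightarrow> ('a \<Rightarrow> 'k::comm_ring_1) \<Rightarrow> ('a \<Rightarrow> 'k)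
                   \<Rightarrow> 'a set \<Rightarrow> 'a set \<Rightarrow> 'k poly" where
  "pi_poly le \<tau> \<eta> Y D = (\<Sum>I\<in>downsets le Y. monom (phi le \<tau> \<eta> D I) (card I))"

end

theory Submission
  imports Defs
begin

lemma po_facts:
  assumes "partial_order_pred \<Omega> le"
  shows "x \<in> \<Omega> \<Longrightarrow> le x x"
    and "x \<in> \<Omega> \<Longrightarrow> y \<in> \<Omega> \<Longrightarrow> le x y \<Longrightarrow> le y x \<Longrightarrow> x = y"
    and "x \<in> \<Omega> \<Longrightarrow> y \<in> \<Omega> \<Longrightarrow> z \<in> \<Omega> \<Longrightarrow> le x y \<Longrightarrow> le y z \<Longrightarrow> le x z"
  using assms unfolding partial_order_pred_def by blast+

lemma smult_sum_r: "smult c (sum g S) = (\<Sum>x\<in>S. smult c (g x))"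
  by (induct S rule: infinite_finite_induct) (auto simp: smult_add_right)

lemma phi_noe:
  assumes "e \<notin> I"
  shows "phi le \<tau> \<eta> D I = phi le \<tau> \<eta> (D - {e}) I"
proof -
  have "I \<inter> D = I \<inter> (D - {e})" using assms by blast
  moreover have "maxs le I - D = maxs le I - (D - {e})" using assms unfolding maxs_def by blast
  ultimately show ?thesis unfolding phi_def by simp
qed

lemma maxs_union:
  assumes po: "partial_order_pred \<Omega> le" and YO: "Y \<subseteq> \<Omega>"
    and e: "e \<in> maxs le Y" and E: "E = down_gen le Y {e}" and J: "J \<subseteq> Y - E"
  shows "maxs le (E \<union> J) = insert e (maxs le J)"
proof -
  have eY: "e \<in> Y" using e unfolding maxs_def by auto
  have eE: "e \<in> E" using eY YO po_facts(1)[OF po] unfolding E down_gen_def by auto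
  have EY: "E \<subseteq> Y" unfolding E down_gen_def by auto
  have emax: "\<And>z. z \<in> Y \<Longrightarrow> le e z \<Longrightarrow> z = e" using e unfolding maxs_def by auto
  show ?thesis
  proof (rule set_eqI)
    fix x
    show "x \<in> maxs le (E \<union> J) \<longleftrightarrow> x \<in> insert e (maxs le J)"
    proof
      assume x: "x \<in> maxs le (E \<union> J)"
      then have xI: "x \<in> E \<union> J" and xm: "\<And>z. z \<in> E \<union> J \<Longrightarrow> le x z \<Longrightarrow> z = x"
        unfolding maxs_def by auto
      show "x \<in> insert e (maxs le J)"
      proof (cases "x \<in> E")
        case True
        then have "le x e" unfolding E down_gen_def by auto
        then have "e = x" using xm eE by auto
        then show ?thesis by simp
      next
        case False
        then have "x \<in> J" using xI by auto
        then show ?thesis using xm unfolding maxs_def by auto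
      qed
    next
      assume x: "x \<in> insert e (maxs le J)"
      show "x \<in> maxs le (E \<union> J)"
      proof (cases "x = e")
        case True
        then show ?thesis using eE emax EY J unfolding maxs_def by blast
      next
        case False
        then have xJ: "x \<in> J" and xm: "\<And>z. z \<in> J \<Longrightarrow> le x z \<Longrightarrow> z = x"
          using x unfolding maxs_def by auto
        have "z = x" if z: "z \<in> E \<union> J" "le x z" for z
        proof (cases "z \<in> E")
          case True
          then have "le z e" "z \<in> Y" unfolding E down_gen_def by auto
          then have "le x e" using po_facts(3)[OF po, of x z e] z xJ J YO eY by auto
          then have "x \<in> E" using xJ J unfolding E down_gen_def by auto
          then show ?thesis using xJ J by auto
        next
          case False
          then show ?thesis using z xm by auto
        qed
        then show ?thesis using xJ unfolding maxs_def by auto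
      qed
    qed
  qed
qed

lemma downsets_split:
  assumes po: "partial_order_pred \<Omega> le" and YO: "Y \<subseteq> \<Omega>"
    and e: "e \<in> maxs le Y" and E: "E = down_gen le Y {e}"
  shows "downsets le Y = downsets le (Y - {e}) \<union> (\<lambda>J. E \<union> J) ` downsets le (Y - E)"
proof -
  have eY: "e \<in> Y" using e unfolding maxs_def by auto
  have eE: "e \<in> E" using eY YO po_facts(1)[OF po] unfolding E down_gen_def by auto
  have EY: "E \<subseteq> Y" unfolding E down_gen_def by auto
  have emax: "\<And>z. z \<in> Y \<Longrightarrow> le e z \<Longrightarrow> z = e" using e unfolding maxs_def by auto
  have Edown: "y \<in> E" if "y \<in> Y" "a \<in> E" "le y a" for y a
  proof -
    have "le a e" "a \<in> Y" using that unfolding E down_gen_def by auto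
    then have "le y e" using po_facts(3)[OF po, of y a e] that YO eY by auto
    then show ?thesis using that unfolding E down_gen_def by auto
  qed
  show ?thesis
  proof (rule set_eqI)
    fix I
    show "I \<in> downsets le Y \<longleftrightarrow> I \<in> downsets le (Y - {e}) \<union> (\<lambda>J. E \<union> J) ` downsets le (Y - E)"
    proof
      assume I: "I \<in> downsets le Y"
      show "I \<in> downsets le (Y - {e}) \<union> (\<lambda>J. E \<union> J) ` downsets le (Y - E)"
      proof (cases "e \<in> I")
        case False
        then have "I \<in> downsets le (Y - {e})" using I unfolding downsets_def by auto
        then show ?thesis by blast
      next
        case True
        have "E \<subseteq> I" using I True unfolding downsets_def E down_gen_def by auto
        moreover have "I - E \<in> downsets le (Y - E)" using I unfolding downsets_def by auto
        ultimately have "I = E \<union> (I - E)" "I - E \<in> downsets le (Y - E)" by auto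
        then show ?thesis by blast
      qed
    next
      assume "I \<in> downsets le (Y - {e}) \<union> (\<lambda>J. E \<union> J) ` downsets le (Y - E)"
      then show "I \<in> downsets le Y"
      proof
        assume I: "I \<in> downsets le (Y - {e})"
        have "y \<in> I" if "a \<in> I" "y \<in> Y" "le y a" for a y
        proof (cases "y = e")
          case True
          then have "a = e" using emax that I unfolding downsets_def by auto
          then show ?thesis using that I unfolding downsets_def by auto
        next
          case False
          then show ?thesis using that I unfolding downsets_def by auto
        qed
        then show ?thesis using I unfolding downsets_def by auto
      next
        assume "I \<in> (\<lambda>J. E \<union> J) ` downsets le (Y - E)"
        then obtain J where J: "J \<in> downsets le (Y - E)" and IJ: "I = E \<union> J" by auto
        have "y \<in> I" if "a \<in> I" "y \<in> Y" "le y a" for a y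
        proof (cases "y \<in> E")
          case True then show ?thesis using IJ by auto
        next
          case False
          show ?thesis
          proof (cases "a \<in> E")
            case True then show ?thesis using Edown that False by auto
          next
            case False
            then have "a \<in> J" using that IJ by auto
            then show ?thesis using J that \<open>y \<notin> E\<close> IJ unfolding downsets_def by auto
          qed
        qed
        then show ?thesis using J IJ EY unfolding downsets_def by auto
      qed
    qed
  qed
qed

lemma phi_union:
  assumes po: "partial_order_pred \<Omega> le" and YO: "Y \<subseteq> \<Omega>" and fin: "finite Y"
    and e: "e \<in> maxs le Y" and E: "E = down_gen le Y {e}" and J: "J \<subseteq> Y - E"
    and D: "D \<in> upsets le Y"
  shows "phi le \<tau> \<eta> D (E \<union> J) =
    (if e \<notin> D then \<eta> e * (\<Prod>i\<in>E - {e}. \<tau> i) * phi le \<tau> \<eta> D J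
     else if e \<in> D - mins le D then 0
     else - ((\<Prod>i\<in>E - {e}. \<tau> i) * phi le \<tau> \<eta> (D - {e}) J))"
proof -
  have eY: "e \<in> Y" using e unfolding maxs_def by auto
  have eE: "e \<in> E" using eY YO po_facts(1)[OF po] unfolding E down_gen_def by auto
  have EY: "E \<subseteq> Y" unfolding E down_gen_def by auto
  have finE: "finite E" using EY fin finite_subset by blast
  have finJ: "finite J" using J fin finite_subset by blast
  have M: "maxs le (E \<union> J) = insert e (maxs le J)" using maxs_union[OF po YO e E J] .
  have mJ: "maxs le J \<subseteq> J" unfolding maxs_def by auto
  have eJ: "e \<notin> J" using J eE by auto
  have diff: "(E \<union> J) - maxs le (E \<union> J) = (E - {e}) \<union> (J - maxs le J)"
    using M mJ J eE by auto
  have Pt: "(\<Prod>i\<in>(E \<union> J) - maxs le (E \<union> J). \<tau> i)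
      = (\<Prod>i\<in>E - {e}. \<tau> i) * (\<Prod>i\<in>J - maxs le J. \<tau> i)"
    unfolding diff by (rule prod.union_disjoint) (use finE finJ J in auto)
  have DE: "D \<inter> E \<subseteq> {e}" if "e \<in> mins le D \<or> e \<notin> D"
  proof
    fix y assume y: "y \<in> D \<inter> E"
    then have "le y e" "y \<in> Y" unfolding E down_gen_def by auto
    then show "y \<in> {e}"
      using that y D eY unfolding upsets_def mins_def by auto
  qed
  show ?thesis
  proof (cases "e \<in> D")
    case False
    have ID: "(E \<union> J) \<inter> D = J \<inter> D" using DE False by auto
    have cond: "((E \<union> J) \<inter> D \<subseteq> maxs le (E \<union> J)) = (J \<inter> D \<subseteq> maxs le J)"
      unfolding ID M using False by auto
    have md: "maxs le (E \<union> J) - D = insert e (maxs le J - D)" using M False by auto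
    have Pe: "(\<Prod>i\<in>maxs le (E \<union> J) - D. \<eta> i) = \<eta> e * (\<Prod>i\<in>maxs le J - D. \<eta> i)"
      unfolding md by (rule prod.insert) (use finJ mJ eJ finite_subset in auto)
    show ?thesis using False unfolding phi_def cond unfolding ID Pt Pe by (simp add: algebra_simps)
  next
    case True
    show ?thesis
    proof (cases "e \<in> mins le D")
      case False
      then obtain z where z: "z \<in> D" "le z e" "z \<noteq> e" using True unfolding mins_def by auto
      have "z \<in> Y" using z D unfolding upsets_def by auto
      then have "z \<in> E" using z unfolding E down_gen_def by auto
      then have "z \<in> (E \<union> J) \<inter> D" "z \<notin> maxs le (E \<union> J)" using z M mJ eJ J by auto
      then have "phi le \<tau> \<eta> D (E \<union> J) = 0" unfolding phi_def by auto
      then show ?thesis using True False by simp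
    next
      case mn: True
      have ID: "(E \<union> J) \<inter> D = insert e (J \<inter> (D - {e}))" using DE mn True eE eJ by auto
      have cond: "((E \<union> J) \<inter> D \<subseteq> maxs le (E \<union> J)) = (J \<inter> (D - {e}) \<subseteq> maxs le J)"
        unfolding ID M using eJ by auto
      have cd: "card ((E \<union> J) \<inter> D) = Suc (card (J \<inter> (D - {e})))"
        unfolding ID using finJ eJ by simp
      have md: "maxs le (E \<union> J) - D = maxs le J - (D - {e})" using M True mJ eJ by auto
      have mn2: "e \<in> D - mins le D \<longleftrightarrow> False" using mn by auto
      show ?thesis using True unfolding phi_def cond unfolding cd Pt md mn2 by (simp add: algebra_simps)
    qed
  qed
qed

theorem lemma3p1:
  fixes \<Omega> :: "'a set" and le :: "'a \<Rightarrow> 'a \<Rightarrow> bool"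
    and \<tau> \<eta> :: "'a \<Rightarrow> 'k::comm_ring_1"
    and Y D :: "'a set" and e :: 'a
  assumes "finite \<Omega>" and "partial_order_pred \<Omega> le"
    and "Y \<subseteq> \<Omega>" and "D \<in> upsets le Y" and "e \<in> maxs le Y"
  shows "pi_poly le \<tau> \<eta> Y D - pi_poly le \<tau> \<eta> (Y - {e}) (D - {e}) =
    (if e \<notin> D then
       smult (\<eta> e * (\<Prod>i\<in>down_gen le Y {e} - {e}. \<tau> i))
         (monom 1 (card (down_gen le Y {e})) * pi_poly le \<tau> \<eta> (Y - down_gen le Y {e}) D)
     else if e \<in> D - mins le D then 0
     else - smult (\<Prod>i\<in>down_gen le Y {e} - {e}. \<tau> i)
         (monom 1 (card (down_gen le Y {e})) * pi_poly le \<tau> \<eta> (Y - down_gen le Y {e}) (D - {e})))"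
proof -
  note po = assms(2)
  have fin: "finite Y" using assms(1,3) finite_subset by blast
  define E where "E = down_gen le Y {e}"
  have eY: "e \<in> Y" using assms(5) unfolding maxs_def by auto
  have eE: "e \<in> E" using eY assms(3) po_facts(1)[OF po] unfolding E_def down_gen_def by auto
  have EY: "E \<subseteq> Y" unfolding E_def down_gen_def by auto
  have finE: "finite E" using EY fin finite_subset by blast
  have fds: "finite (downsets le Z)" if "finite Z" for Z :: "'a set"
  proof -
    have "downsets le Z \<subseteq> Pow Z" unfolding downsets_def by auto
    then show ?thesis using that finite_subset by blast
  qed
  have split: "downsets le Y = downsets le (Y - {e}) \<union> (\<lambda>J. E \<union> J) ` downsets le (Y - E)"
    by (rule downsets_split[OF po assms(3) assms(5) E_def])
  have disj: "downsets le (Y - {e}) \<inter> (\<lambda>J. E \<union> J) ` downsets le (Y - E) = {}"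
    using eE unfolding downsets_def by auto
  have inj: "inj_on (\<lambda>J. E \<union> J) (downsets le (Y - E))"
    unfolding downsets_def inj_on_def by auto
  define f where "f = (\<lambda>I. monom (phi le \<tau> \<eta> D I) (card I))"
  have "pi_poly le \<tau> \<eta> Y D = sum f (downsets le (Y - {e})) + sum f ((\<lambda>J. E \<union> J) ` downsets le (Y - E))"
    unfolding pi_poly_def f_def[symmetric] split
    by (rule sum.union_disjoint) (use fds fin disj in auto)
  also have "sum f (downsets le (Y - {e})) = pi_poly le \<tau> \<eta> (Y - {e}) (D - {e})"
    unfolding pi_poly_def f_def
    by (rule sum.cong) (auto simp: downsets_def intro: phi_noe)
  also have "sum f ((\<lambda>J. E \<union> J) ` downsets le (Y - E))
      = (\<Sum>J\<in>downsets le (Y - E). monom (phi le \<tau> \<eta> D (E \<union> J)) (card E + card J))"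
    unfolding sum.reindex[OF inj] f_def o_def
  proof (rule sum.cong)
    fix J assume "J \<in> downsets le (Y - E)"
    then have "J \<subseteq> Y - E" unfolding downsets_def by auto
    then have "card (E \<union> J) = card E + card J"
      using finE fin by (intro card_Un_disjoint) (auto intro: finite_subset)
    then show "monom (phi le \<tau> \<eta> D (E \<union> J)) (card (E \<union> J)) = monom (phi le \<tau> \<eta> D (E \<union> J)) (card E + card J)"
      by simp
  qed simp
  finally have main: "pi_poly le \<tau> \<eta> Y D - pi_poly le \<tau> \<eta> (Y - {e}) (D - {e})
      = (\<Sum>J\<in>downsets le (Y - E). monom (phi le \<tau> \<eta> D (E \<union> J)) (card E + card J))"
    by simp
  have pu: "phi le \<tau> \<eta> D (E \<union> J) =
    (if e \<notin> D then \<eta> e * (\<Prod>i\<in>E - {e}. \<tau> i) * phi le \<tau> \<eta> D J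
     else if e \<in> D - mins le D then 0
     else - ((\<Prod>i\<in>E - {e}. \<tau> i) * phi le \<tau> \<eta> (D - {e}) J))"
    if "J \<in> downsets le (Y - E)" for J
    using phi_union[OF po assms(3) fin assms(5) E_def _ assms(4)] that unfolding downsets_def by auto
  have gen: "smult c (monom 1 (card E) * pi_poly le \<tau> \<eta> (Y - E) D')
      = (\<Sum>J\<in>downsets le (Y - E). monom (c * phi le \<tau> \<eta> D' J) (card E + card J))" for c D'
    unfolding pi_poly_def by (simp add: sum_distrib_left smult_sum_r mult_monom smult_monom)
  define L where "L = (\<Sum>J\<in>downsets le (Y - E). monom (phi le \<tau> \<eta> D (E \<union> J)) (card E + card J))"
  have c1: "L = smult (\<eta> e * (\<Prod>i\<in>E - {e}. \<tau> i)) (monom 1 (card E) * pi_poly le \<tau> \<eta> (Y - E) D)"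
    if "e \<notin> D"
    unfolding gen L_def using that by (auto intro!: sum.cong simp: pu mult.assoc)
  have c2: "L = 0" if "e \<in> D - mins le D"
    unfolding L_def using that by (auto intro!: sum.neutral simp: pu)
  have c3: "L = - smult (\<Prod>i\<in>E - {e}. \<tau> i) (monom 1 (card E) * pi_poly le \<tau> \<eta> (Y - E) (D - {e}))"
    if "e \<in> D" "e \<notin> D - mins le D"
    unfolding gen L_def using that by (auto intro!: sum.cong simp: pu mult.assoc sum_negf[symmetric] minus_monom)
  show ?thesis
    unfolding main L_def[symmetric] E_def[symmetric] using c1 c2 c3 by auto
qed

end
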